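(* Let $\mathcal X=\{x_{n,k}\}$ be a Marcinkiewicz–Zygmund family on $\mathbb T$ with weights $\tau_{n,k}$ and constants $A,B>0$, and let $w_{n,k}$ and $I_n$ be the associated quadrature weights and quadrature rules (as defined in the context). Then: (i) $I_n$ is exact on $\mathcal T_n$, i.e. $I_n(p)=\int_{-1/2}^{1/2}p(x)\,dx$ for all $p\in\mathcal T_n$. (ii) For $f\in H^\sigma(\mathbb T)$, $\sigma>1/2$, $$|I_n(f)|^2\le A^{-1}\sum_{k=1}^{L_n}|f(x_{n,k})|^2\tau_{n,k}\le \frac BA\|f\|_\infty^2.$$
   Context: $\mathbb T=\mathbb R/\mathbb Z\cong(-1/2,1/2]$ with Lebesgue measure; $\langle f,g\rangle=\int_{-1/2}^{1/2}f\bar g\,dx$. $\mathcal T_n$ = trigonometric polynomials $\sum_{|k|\le n}c_ke^{2\pi ikx}$. $H^\sigma(\mathbb T)$ = functions with $\sum_{k\in\mathbb Z}|\hat f(k)|^2(1+k^2)^\sigma<\infty$, $\hat f(k)=\int_0^1f(x)e^{-2\pi ikx}dx$ (for $\sigma>1/2$ these are continuous). A Marcinkiewicz–Zygmund family is a set $\{x_{n,k}: n\in\mathbb N,k=1,\dots,L_n\}\subseteq\mathbb T$ with weights $\tau_{n,k}>0$ and constants $A,B>0$ independent of $n$ such that $A\|p\|_2^2\le\sum_{k=1}^{L_n}|p(x_{n,k})|^2\tau_{n,k}\le B\|p\|_2^2$ for all $p\in\mathcal T_n$. Let $k^{(n)}_x\in\mathcal T_n$ be the reproducing kernel of $\mathcal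 T_n$, $p(x)=\langle p,k^{(n)}_x\rangle$ for $p\in\mathcal T_n$ (the Dirichlet kernel $k^{(n)}_x(y)=\sin((2n+1)\pi(y-x))/\sin(\pi(y-x))$). Let $S_np=\sum_{k=1}^{L_n}\tau_{n,k}\langle p,k^{(n)}_{x_{n,k}}\rangle k^{(n)}_{x_{n,k}}$ (the frame operator, invertible on $\mathcal T_n$), $e_{n,k}=S_n^{-1}(\tau_{n,k}^{1/2}k^{(n)}_{x_{n,k}})$, $w_{n,k}=\tau_{n,k}^{1/2}\int_{-1/2}^{1/2}e_{n,k}(x)\,dx$, and $I_n(f)=\sum_{k=1}^{L_n}f(x_{n,k})w_{n,k}$. *)

theory Defs
  imports "HOL-Analysis.Analysis"
begin

text \<open>Functions on the torus R/Z are represented as 1-periodic functions real => complex.\<close>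

definition cexp2 :: "int \<Rightarrow> real \<Rightarrow> complex" where
  "cexp2 j t = exp (2 * of_real pi * \<i> * of_int j * of_real t)"

definition trigpoly :: "nat \<Rightarrow> (real \<Rightarrow> complex) \<Rightarrow> bool" where
  "trigpoly n p \<longleftrightarrow> (\<exists>c :: int \<Rightarrow> complex. p = (\<lambda>t. \<Sum>j\<in>{- int n..int n}. c j * cexp2 j t))"

definition ip :: "(real \<Rightarrow> complex) \<Rightarrow> (real \<Rightarrow> complex) \<Rightarrow> complex" where
  "ip f g = integral {-1/2..1/2} (\<lambda>t. f t * cnj (g t))"

definition L2norm :: "(real \<Rightarrow> complex) \<Rightarrow> real" where
  "L2norm f = sqrt (integral {-1/2..1/2} (\<lambda>t. (cmod (f t))\<^sup>2))"

definition supnorm :: "(real \<Rightarrow> complex) \<Rightarrow> real" where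
  "supnorm f = (SUP t. cmod (f t))"

text \<open>Reproducing (Dirichlet) kernel of T_n at the point x:
  k_x(y) = sum_{|j|<=n} e^{2 pi i j (y-x)} = sin((2n+1)pi(y-x))/sin(pi(y-x)).\<close>
definition kern :: "nat \<Rightarrow> real \<Rightarrow> real \<Rightarrow> complex" where
  "kern n x y = (\<Sum>j\<in>{- int n..int n}. cexp2 j (y - x))"

definition fourier_coeff :: "(real \<Rightarrow> complex) \<Rightarrow> int \<Rightarrow> complex" where
  "fourier_coeff f k = integral {0..1} (\<lambda>t. f t * cexp2 (- k) t)"

definition sobolev :: "real \<Rightarrow> (real \<Rightarrow> complex) \<Rightarrow> bool" where
  "sobolev \<sigma> f \<longleftrightarrow> (\<forall>t. f (t + 1) = f t) \<and> continuous_on UNIV f \<and>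
     (\<lambda>k::int. (cmod (fourier_coeff f k))\<^sup>2 * (1 + (real_of_int k)\<^sup>2) powr \<sigma>) summable_on UNIV"

definition MZ_family :: "(nat \<Rightarrow> nat \<Rightarrow> real) \<Rightarrow> (nat \<Rightarrow> nat \<Rightarrow> real) \<Rightarrow> (nat \<Rightarrow> nat)
    \<Rightarrow> real \<Rightarrow> real \<Rightarrow> bool" where
  "MZ_family x \<tau> L A B \<longleftrightarrow> A > 0 \<and> B > 0 \<and>
     (\<forall>n. \<forall>k\<in>{1..L n}. \<tau> n k > 0) \<and>
     (\<forall>n p. trigpoly n p \<longrightarrow>
        A * (L2norm p)\<^sup>2 \<le> (\<Sum>k=1..L n. (cmod (p (x n k)))\<^sup>2 * \<tau> n k) \<and>
        (\<Sum>k=1..L n. (cmod (p (x n k)))\<^sup>2 * \<tau> n k) \<le> B * (L2norm p)\<^sup>2)"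

definition frame_op :: "(nat \<Rightarrow> nat \<Rightarrow> real) \<Rightarrow> (nat \<Rightarrow> nat \<Rightarrow> real) \<Rightarrow> (nat \<Rightarrow> nat)
    \<Rightarrow> nat \<Rightarrow> (real \<Rightarrow> complex) \<Rightarrow> (real \<Rightarrow> complex)" where
  "frame_op x \<tau> L n p = (\<lambda>y. \<Sum>k=1..L n. of_real (\<tau> n k) * ip p (kern n (x n k)) * kern n (x n k) y)"

definition dual_frame :: "(nat \<Rightarrow> nat \<Rightarrow> real) \<Rightarrow> (nat \<Rightarrow> nat \<Rightarrow> real) \<Rightarrow> (nat \<Rightarrow> nat)
    \<Rightarrow> nat \<Rightarrow> nat \<Rightarrow> (real \<Rightarrow> complex)" where
  "dual_frame x \<tau> L n k = (THE e. trigpoly n e \<and>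
      frame_op x \<tau> L n e = (\<lambda>y. of_real (sqrt (\<tau> n k)) * kern n (x n k) y))"

definition quad_weight :: "(nat \<Rightarrow> nat \<Rightarrow> real) \<Rightarrow> (nat \<Rightarrow> nat \<Rightarrow> real) \<Rightarrow> (nat \<Rightarrow> nat)
    \<Rightarrow> nat \<Rightarrow> nat \<Rightarrow> complex" where
  "quad_weight x \<tau> L n k = of_real (sqrt (\<tau> n k)) * integral {-1/2..1/2} (dual_frame x \<tau> L n k)"

definition quad_rule :: "(nat \<Rightarrow> nat \<Rightarrow> real) \<Rightarrow> (nat \<Rightarrow> nat \<Rightarrow> real) \<Rightarrow> (nat \<Rightarrow> nat)
    \<Rightarrow> nat \<Rightarrow> (real \<Rightarrow> complex) \<Rightarrow> complex" where
  "quad_rule x \<tau> L n f = (\<Sum>k=1..L n. f (x n k) * quad_weight x \<tau> L n k)"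

end

theory Submission imports Defs "HOL-Library.Function_Algebras" begin

lemma cexp2_add: "cexp2 j (s + t) = cexp2 j s * cexp2 j t"
  unfolding cexp2_def by (simp add: algebra_simps exp_add[symmetric])
lemma cexp2_diff: "cexp2 j (y - x) = cexp2 j y * cexp2 (-j) x"
  unfolding cexp2_def by (simp add: algebra_simps exp_add[symmetric])
lemma cexp2_mult: "cexp2 j t * cexp2 l t = cexp2 (j + l) t"
  unfolding cexp2_def by (simp add: algebra_simps exp_add[symmetric])
lemma cnj_cexp2: "cnj (cexp2 j t) = cexp2 (-j) t"
  unfolding cexp2_def by (simp add: exp_cnj)
lemma cexp2_0[simp]: "cexp2 0 t = 1"
  unfolding cexp2_def by simp
lemma cexp2_1: "cexp2 m 1 = 1"
  unfolding cexp2_def using exp_integer_2pi[of "of_int m"] by (simp add: algebra_simps)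
lemma cont_cexp2[continuous_intros]: "continuous_on S (cexp2 j)"
  unfolding cexp2_def by (intro continuous_intros)

lemma deriv_cexp2:
  "((\<lambda>t. cexp2 m t / (2 * of_real pi * \<i> * of_int m)) has_vector_derivative cexp2 m t) (at t within S)"
  if "m \<noteq> 0"
proof -
  have "((\<lambda>t. exp ((2 * of_real pi * \<i> * of_int m) * of_real t)) has_vector_derivative
         (2 * of_real pi * \<i> * of_int m) * exp ((2 * of_real pi * \<i> * of_int m) * of_real t)) (at t within S)"
    using exp_scaleR_has_vector_derivative_right[of "2 * of_real pi * \<i> * of_int m" t S]
    by (simp add: scaleR_conv_of_real mult.commute)
  note D = this
  have "((\<lambda>t. exp ((2 * of_real pi * \<i> * of_int m) * of_real t) / (2 * of_real pi * \<i> * of_int m)) has_vector_derivative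
         exp ((2 * of_real pi * \<i> * of_int m) * of_real t)) (at t within S)"
    using has_vector_derivative_divide[OF D, of "2 * of_real pi * \<i> * of_int m"] that by simp
  then show ?thesis unfolding cexp2_def by (simp add: mult.assoc)
qed

lemma int_cexp2: "(cexp2 m has_integral (if m = 0 then 1 else 0)) {-1/2..1/2}"
proof (cases "m = 0")
  case True
  have "cexp2 0 = (\<lambda>x. 1)" by (rule ext) simp
  then show ?thesis using True has_integral_const_real[of "1::complex" "-1/2" "1/2"] by simp
next
  case False
  have "(cexp2 m has_integral (cexp2 m (1/2) / (2 * of_real pi * \<i> * of_int m)
     - cexp2 m (-1/2) / (2 * of_real pi * \<i> * of_int m))) {-1/2..1/2}"
    by (rule fundamental_theorem_of_calculus) (use deriv_cexp2[OF False] in auto)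
  moreover have "cexp2 m (1/2) = cexp2 m (-1/2)"
    using cexp2_add[of m "-1/2" 1] cexp2_1[of m] by simp
  ultimately show ?thesis using False by simp
qed
definition tp :: "nat \<Rightarrow> (int \<Rightarrow> complex) \<Rightarrow> real \<Rightarrow> complex" where
  "tp n c = (\<lambda>t. \<Sum>j\<in>{- int n..int n}. c j * cexp2 j t)"

lemma trigpoly_tp: "trigpoly n p \<longleftrightarrow> (\<exists>c. p = tp n c)"
  unfolding trigpoly_def tp_def ..

lemma cont_tp[continuous_intros]: "continuous_on S (tp n c)"
  unfolding tp_def by (intro continuous_intros)

lemma trigpoly_cont: "trigpoly n p \<Longrightarrow> continuous_on S p"
  unfolding trigpoly_tp using cont_tp by blast

lemma trigpoly_integrable: "trigpoly n p \<Longrightarrow> p integrable_on {a..b}"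
  by (intro integrable_continuous_interval trigpoly_cont)

lemma orth: "((\<lambda>t. cexp2 j t * cnj (cexp2 l t)) has_integral (if j = l then 1 else 0)) {-1/2..1/2}"
  using int_cexp2[of "j - l"] by (simp add: cnj_cexp2 cexp2_mult)

lemma int_tp_cnj_tp:
  "((\<lambda>t. tp n c t * cnj (tp n d t)) has_integral (\<Sum>j\<in>{- int n..int n}. c j * cnj (d j))) {-1/2..1/2}"
proof -
  have e: "tp n c t * cnj (tp n d t) = (\<Sum>j\<in>{- int n..int n}. \<Sum>l\<in>{- int n..int n}.
      (c j * cnj (d l)) * (cexp2 j t * cnj (cexp2 l t)))" for t
    unfolding tp_def apply (simp add: sum_distrib_left sum_distrib_right cnj_sum algebra_simps)
    by (rule sum.swap)
  have "((\<lambda>t. \<Sum>j\<in>{- int n..int n}. \<Sum>l\<in>{- int n..int n}.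
      (c j * cnj (d l)) * (cexp2 j t * cnj (cexp2 l t))) has_integral
      (\<Sum>j\<in>{- int n..int n}. \<Sum>l\<in>{- int n..int n}. (c j * cnj (d l)) * (if j = l then 1 else 0))) {-1/2..1/2}"
    by (intro has_integral_sum has_integral_mult_right orth finite_atLeastAtMost_int)
  moreover have "(\<Sum>j\<in>{- int n..int n}. \<Sum>l\<in>{- int n..int n}. (c j * cnj (d l)) * (if j = l then 1 else 0))
     = (\<Sum>j\<in>{- int n..int n}. c j * cnj (d j))"
    by (simp add: if_distrib cong: if_cong)
  ultimately show ?thesis unfolding e by simp
qed

lemma int_tp: "(tp n c has_integral c 0) {-1/2..1/2}"
proof -
  have "((\<lambda>t. \<Sum>j\<in>{- int n..int n}. c j * cexp2 j t) has_integral
     (\<Sum>j\<in>{- int n..int n}. c j * (if j = 0 then 1 else 0))) {-1/2..1/2}"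
    by (intro has_integral_sum has_integral_mult_right int_cexp2 finite_atLeastAtMost_int)
  then show ?thesis unfolding tp_def by (simp add: if_distrib cong: if_cong)
qed

lemma kern_tp: "kern n x = tp n (\<lambda>l. cexp2 (-l) x)"
  unfolding kern_def tp_def by (simp add: cexp2_diff mult.commute)

lemma reproducing: "trigpoly n p \<Longrightarrow> ip p (kern n x) = p x"
proof -
  assume "trigpoly n p"
  then obtain c where p: "p = tp n c" unfolding trigpoly_tp by blast
  show ?thesis unfolding ip_def p kern_tp
    using int_tp_cnj_tp[of n c "\<lambda>l. cexp2 (-l) x"] by (simp add: cnj_cexp2 tp_def integral_unique)
qed

lemma int_norm2_tp:
  "((\<lambda>t. (cmod (tp n c t))\<^sup>2) has_integral (\<Sum>j\<in>{- int n..int n}. (cmod (c j))\<^sup>2)) {-1/2..1/2}"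
proof -
  have "((\<lambda>t. Re (tp n c t * cnj (tp n c t))) has_integral Re (\<Sum>j\<in>{- int n..int n}. c j * cnj (c j))) {-1/2..1/2}"
    by (rule has_integral_Re[OF int_tp_cnj_tp])
  moreover have "Re (z * cnj z) = (cmod z)\<^sup>2" for z
    by (simp add: complex_norm_square[symmetric] del: complex_mult_cnj)
  ultimately show ?thesis by (simp add: Re_sum)
qed

lemma L2norm_tp: "(L2norm (tp n c))\<^sup>2 = (\<Sum>j\<in>{- int n..int n}. (cmod (c j))\<^sup>2)"
  unfolding L2norm_def using integral_unique[OF int_norm2_tp[of n c]]
  by (simp add: sum_nonneg)

lemma ip_swap: "ip f g = cnj (ip g f)"
  unfolding ip_def integral_cnj by (simp add: mult.commute)

lemma tp_zero: "L2norm (tp n c) = 0 \<Longrightarrow> j \<in> {- int n..int n} \<Longrightarrow> c j = 0"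
  using L2norm_tp[of n c] by (simp add: sum_nonneg_eq_0_iff)

lemma sum_fun_apply: "(\<Sum>v\<in>S. f v) t = (\<Sum>v\<in>S. f v t)"
proof (induction S rule: infinite_finite_induct)
  case (insert x F)
  then show ?case by (simp add: plus_fun_def)
qed (simp_all add: zero_fun_def)

definition scl :: "complex \<Rightarrow> (real \<Rightarrow> complex) \<Rightarrow> real \<Rightarrow> complex" where
  "scl c f = (\<lambda>t. c * f t)"

interpretation fs: vector_space scl
  by unfold_locales (auto simp: scl_def fun_eq_iff algebra_simps)

lemma inj_cexp2: "inj_on cexp2 S"
proof
  fix j l assume "cexp2 j = cexp2 l"
  then have "((\<lambda>t. cexp2 j t * cnj (cexp2 l t)) has_integral 1) {-1/2..1/2}"
    using orth[of j j] by simp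
  from has_integral_unique[OF this orth[of j l]] show "j = l" by (simp split: if_splits)
qed

lemma sum_B: "(\<Sum>v\<in>cexp2 ` {- int n..int n}. scl (u v) v) = tp n (\<lambda>j. u (cexp2 j))"
  by (rule ext) (simp add: sum_fun_apply scl_def tp_def sum.reindex[OF inj_cexp2])

lemma span_B: "fs.span (cexp2 ` {- int n..int n}) = {p. trigpoly n p}"
proof -
  have "fs.span (cexp2 ` {- int n..int n}) = range (\<lambda>u. tp n (\<lambda>j. u (cexp2 j)))"
    by (simp add: fs.span_finite sum_B)
  also have "\<dots> = range (tp n)"
  proof safe
    fix c show "tp n c \<in> range (\<lambda>u. tp n (\<lambda>j. u (cexp2 j)))"
      by (rule image_eqI[of _ _ "\<lambda>v. c (inv_into UNIV cexp2 v)"]) (simp_all add: inv_into_f_f[OF inj_cexp2])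
  qed auto
  finally show ?thesis by (auto simp: trigpoly_tp)
qed

lemma indep_B: "fs.independent (cexp2 ` {- int n..int n})"
proof
  assume "fs.dependent (cexp2 ` {- int n..int n})"
  then obtain u where u: "\<exists>v\<in>cexp2 ` {- int n..int n}. u v \<noteq> 0"
    "(\<Sum>v\<in>cexp2 ` {- int n..int n}. scl (u v) v) = 0"
    by (auto simp: fs.dependent_finite)
  then have "tp n (\<lambda>j. u (cexp2 j)) = 0" by (simp add: sum_B)
  then have "L2norm (tp n (\<lambda>j. u (cexp2 j))) = 0" by (simp add: L2norm_def zero_fun_def)
  moreover obtain j where "j \<in> {- int n..int n}" "u (cexp2 j) \<noteq> 0" using u(1) by blast
  ultimately show False using tp_zero[of n "\<lambda>j. u (cexp2 j)" j] by simp
qed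

lemma card_B: "card (cexp2 ` {- int n..int n}) = 2 * n + 1"
  by (simp add: card_image[OF inj_cexp2])

definition Sf :: "(nat \<Rightarrow> nat \<Rightarrow> real) \<Rightarrow> (nat \<Rightarrow> nat \<Rightarrow> real) \<Rightarrow> (nat \<Rightarrow> nat)
    \<Rightarrow> nat \<Rightarrow> (real \<Rightarrow> complex) \<Rightarrow> (real \<Rightarrow> complex)" where
  "Sf x \<tau> L n g = (\<lambda>y. \<Sum>k=1..L n. of_real (\<tau> n k) * g (x n k) * kern n (x n k) y)"

lemma frame_op_Sf: "trigpoly n e \<Longrightarrow> frame_op x \<tau> L n e = Sf x \<tau> L n e"
  unfolding frame_op_def Sf_def by (simp add: reproducing)

lemma Sf_tp: "Sf x \<tau> L n g = tp n (\<lambda>l. \<Sum>k=1..L n. of_real (\<tau> n k) * g (x n k) * cexp2 (-l) (x n k))"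
  unfolding Sf_def kern_tp tp_def
  apply (rule ext) apply (simp add: sum_distrib_left sum_distrib_right mult.assoc)
  by (rule sum.swap)

lemma Sf_trigpoly: "trigpoly n (Sf x \<tau> L n g)"
  unfolding trigpoly_tp Sf_tp by blast

lemma kern_trigpoly: "trigpoly n (kern n y)"
  unfolding trigpoly_tp kern_tp by blast

lemma ip_kern_left: "trigpoly n b \<Longrightarrow> ip (kern n y) b = cnj (b y)"
  by (subst ip_swap) (simp add: reproducing)

lemma ip_Sf_left: 
  assumes b: "trigpoly n b"
  shows "ip (Sf x \<tau> L n g) b = (\<Sum>k=1..L n. of_real (\<tau> n k) * g (x n k) * cnj (b (x n k)))"
proof -
  have intg: "(\<lambda>t. c * (kern n y t * cnj (b t))) integrable_on {a1..a2}" for y c a1 a2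
    by (intro integrable_continuous_interval continuous_intros trigpoly_cont[OF kern_trigpoly]
        continuous_on_cnj trigpoly_cont[OF b])
  have "ip (Sf x \<tau> L n g) b = integral {-1/2..1/2}
     (\<lambda>t. \<Sum>k=1..L n. of_real (\<tau> n k) * g (x n k) * (kern n (x n k) t * cnj (b t)))"
    unfolding ip_def Sf_def by (simp add: sum_distrib_right mult.assoc)
  also have "\<dots> = (\<Sum>k=1..L n. of_real (\<tau> n k) * g (x n k) * ip (kern n (x n k)) b)"
    unfolding ip_def
    by (subst integral_sum) (simp_all add: intg integral_mult_right)
  also have "\<dots> = (\<Sum>k=1..L n. of_real (\<tau> n k) * g (x n k) * cnj (b (x n k)))"
    by (simp add: ip_kern_left[OF b])
  finally show ?thesis .
qed

lemma ip_Sf_right: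
  assumes a: "trigpoly n a"
  shows "ip a (Sf x \<tau> L n g) = (\<Sum>k=1..L n. of_real (\<tau> n k) * a (x n k) * cnj (g (x n k)))"
  by (subst ip_swap) (simp add: ip_Sf_left[OF a] cnj_sum mult.commute mult.left_commute)

lemma Sf_diff: "Sf x \<tau> L n (f - g) = Sf x \<tau> L n f - Sf x \<tau> L n g"
  unfolding Sf_def by (rule ext) (simp add: sum_subtractf algebra_simps)

lemma trigpoly_diff: "trigpoly n f \<Longrightarrow> trigpoly n g \<Longrightarrow> trigpoly n (f - g)"
proof -
  assume "trigpoly n f" "trigpoly n g"
  then obtain c d where "f = tp n c" "g = tp n d" unfolding trigpoly_tp by blast
  then have "f - g = tp n (\<lambda>j. c j - d j)"
    unfolding tp_def by (simp add: fun_eq_iff sum_subtractf algebra_simps)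
  then show ?thesis unfolding trigpoly_tp by blast
qed

lemma Sf_linear: "Vector_Spaces.linear scl scl (Sf x \<tau> L n)"
  by unfold_locales (auto simp: Sf_def scl_def fun_eq_iff algebra_simps sum.distrib sum_distrib_left)

context
  fixes x \<tau> L A B
  assumes MZ: "MZ_family x \<tau> L A B"
begin

lemma A_pos: "A > 0" using MZ unfolding MZ_family_def by auto

lemma mz_low: "trigpoly n p \<Longrightarrow> A * (L2norm p)\<^sup>2 \<le> (\<Sum>k=1..L n. (cmod (p (x n k)))\<^sup>2 * \<tau> n k)"
  using MZ unfolding MZ_family_def by auto

lemma quad_form: "trigpoly n p \<Longrightarrow>
  ip (Sf x \<tau> L n p) p = of_real (\<Sum>k=1..L n. (cmod (p (x n k)))\<^sup>2 * \<tau> n k)"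
proof -
  assume p: "trigpoly n p"
  have e: "complex_of_real (\<tau> n k) * p (x n k) * cnj (p (x n k)) =
      of_real ((cmod (p (x n k)))\<^sup>2 * \<tau> n k)" for k
  proof -
    have "p (x n k) * cnj (p (x n k)) = of_real ((cmod (p (x n k)))\<^sup>2)"
      by (rule complex_norm_square[symmetric])
    then show ?thesis by (metis mult.assoc mult.commute of_real_mult)
  qed
  show ?thesis unfolding ip_Sf_left[OF p] e of_real_sum ..
qed

lemma Sf_inj0:
  assumes p: "trigpoly n p" and z: "Sf x \<tau> L n p = 0"
  shows "p = 0"
proof -
  have "ip (Sf x \<tau> L n p) p = 0" unfolding z ip_def by (simp add: zero_fun_def)
  then have "(\<Sum>k=1..L n. (cmod (p (x n k)))\<^sup>2 * \<tau> n k) = 0"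
    using quad_form[OF p] by (metis of_real_eq_0_iff)
  with mz_low[OF p] A_pos have "(L2norm p)\<^sup>2 \<le> 0"
    by (simp add: mult_le_0_iff)
  then have "L2norm p = 0" by simp
  moreover obtain c where c: "p = tp n c" using p unfolding trigpoly_tp by blast
  ultimately have "\<forall>j\<in>{- int n..int n}. c j = 0" using tp_zero by blast
  then show ?thesis unfolding c tp_def by (simp add: fun_eq_iff zero_fun_def)
qed

lemma Sf_inj:
  "trigpoly n e1 \<Longrightarrow> trigpoly n e2 \<Longrightarrow> Sf x \<tau> L n e1 = Sf x \<tau> L n e2 \<Longrightarrow> e1 = e2"
  using Sf_inj0[of n "e1 - e2"] by (simp add: Sf_diff trigpoly_diff)

lemma Sf_surj:
  assumes g: "trigpoly n g"
  shows "\<exists>e. trigpoly n e \<and> Sf x \<tau> L n e = g"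
proof -
  interpret Sl: Vector_Spaces.linear scl scl "Sf x \<tau> L n" by (rule Sf_linear)
  define Bs where "Bs = cexp2 ` {- int n..int n}"
  have V: "fs.span Bs = {p. trigpoly n p}" unfolding Bs_def by (rule span_B)
  have fin: "finite Bs" unfolding Bs_def by simp
  have injV: "inj_on (Sf x \<tau> L n) (fs.span Bs)"
    by (subst Sl.inj_on_iff_eq_0[OF fs.subspace_span]) (auto simp: V intro: Sf_inj0)
  have ind: "fs.independent (Sf x \<tau> L n ` Bs)"
    by (rule Sl.independent_injective_image[OF _ injV]) (simp add: Bs_def indep_B)
  have card: "card (Sf x \<tau> L n ` Bs) = card Bs"
    by (rule card_image, rule inj_on_subset[OF injV fs.span_superset])
  have sub: "Sf x \<tau> L n ` Bs \<subseteq> fs.span Bs" by (auto simp: V Sf_trigpoly)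
  have "g \<in> fs.span (Sf x \<tau> L n ` Bs)"
  proof (rule ccontr)
    assume ng: "g \<notin> fs.span (Sf x \<tau> L n ` Bs)"
    then have "fs.independent (insert g (Sf x \<tau> L n ` Bs))"
      by (rule fs.independent_insertI) (rule ind)
    moreover have "insert g (Sf x \<tau> L n ` Bs) \<subseteq> fs.span Bs" using sub g V by auto
    ultimately have "card (insert g (Sf x \<tau> L n ` Bs)) \<le> card Bs"
      using fs.independent_span_bound[OF fin] by blast
    moreover have "g \<notin> Sf x \<tau> L n ` Bs" using ng fs.span_superset by blast
    ultimately show False using card fin by simp
  qed
  then have "g \<in> Sf x \<tau> L n ` fs.span Bs" by (simp add: Sl.span_image)
  then show ?thesis by (auto simp: V)
qed

lemma tau_pos: "k \<in> {1..L n} \<Longrightarrow> \<tau> n k > 0" using MZ unfolding MZ_family_def by auto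

lemma tau_nonneg: "k \<in> {1..L n} \<Longrightarrow> \<tau> n k \<ge> 0" using tau_pos by (simp add: less_imp_le)

lemma mz_up: "trigpoly n p \<Longrightarrow> (\<Sum>k=1..L n. (cmod (p (x n k)))\<^sup>2 * \<tau> n k) \<le> B * (L2norm p)\<^sup>2"
  using MZ unfolding MZ_family_def by auto

lemma one_tp: "(\<lambda>_. 1) = tp n (\<lambda>j. if j = 0 then 1 else 0)"
proof -
  have "(\<Sum>j = - int n..int n. (if j = 0 then 1 else 0) * cexp2 j t) = 1" for t
    by (simp add: if_distrib[of "\<lambda>c. c * _"] cong: if_cong)
  then show ?thesis unfolding tp_def by simp
qed

lemma one_trigpoly: "trigpoly n (\<lambda>_. 1)"
  using one_tp[of n] unfolding trigpoly_tp by blast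

lemma L2norm_one: "L2norm (\<lambda>_. 1) = 1"
proof -
  have "(L2norm (\<lambda>_. 1))\<^sup>2 = 1"
    by (subst one_tp[of 0]) (simp add: L2norm_tp)
  moreover have "L2norm (\<lambda>_. 1) \<ge> 0" unfolding L2norm_def by simp
  ultimately show ?thesis by (simp add: power2_eq_1_iff)
qed

lemma sum_tau_le: "(\<Sum>k=1..L n. \<tau> n k) \<le> B"
  using mz_up[OF one_trigpoly, of n] by (simp add: L2norm_one)

lemma dual_frame_prop:
  "trigpoly n (dual_frame x \<tau> L n k) \<and>
   Sf x \<tau> L n (dual_frame x \<tau> L n k) = (\<lambda>y. of_real (sqrt (\<tau> n k)) * kern n (x n k) y)"
proof -
  let ?g = "\<lambda>y. of_real (sqrt (\<tau> n k)) * kern n (x n k) y"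
  have "?g = tp n (\<lambda>l. of_real (sqrt (\<tau> n k)) * cexp2 (-l) (x n k))"
    unfolding kern_tp tp_def by (simp add: sum_distrib_left mult.assoc)
  then have "trigpoly n ?g" unfolding trigpoly_tp by blast
  then obtain e where e: "trigpoly n e" "Sf x \<tau> L n e = ?g" using Sf_surj by blast
  have "dual_frame x \<tau> L n k = e"
    unfolding dual_frame_def
  proof (rule the_equality)
    show "trigpoly n e \<and> frame_op x \<tau> L n e = ?g" using e by (simp add: frame_op_Sf)
    fix e' assume "trigpoly n e' \<and> frame_op x \<tau> L n e' = ?g"
    then have "trigpoly n e'" "Sf x \<tau> L n e' = ?g" by (auto simp: frame_op_Sf)
    then show "e' = e" using e Sf_inj[of n e' e] by simp
  qed
  then show ?thesis using e by simp
qed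

lemma h_exists: "\<exists>h. trigpoly n h \<and> Sf x \<tau> L n h = (\<lambda>_. 1)"
  using Sf_surj[OF one_trigpoly] .

lemma ip_one: "ip f (\<lambda>_. 1) = integral {-1/2..1/2} f"
  unfolding ip_def by simp

lemma weight_formula:
  assumes h: "trigpoly n h" "Sf x \<tau> L n h = (\<lambda>_. 1)" and k: "k \<in> {1..L n}"
  shows "quad_weight x \<tau> L n k = of_real (\<tau> n k) * cnj (h (x n k))"
proof -
  define e where "e = dual_frame x \<tau> L n k"
  have e: "trigpoly n e" "Sf x \<tau> L n e = (\<lambda>y. of_real (sqrt (\<tau> n k)) * kern n (x n k) y)"
    using dual_frame_prop unfolding e_def by auto
  have "integral {-1/2..1/2} e = ip e (Sf x \<tau> L n h)" by (simp add: h ip_one)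
  also have "\<dots> = ip (Sf x \<tau> L n e) h" by (simp add: ip_Sf_right[OF e(1)] ip_Sf_left[OF h(1)])
  also have "\<dots> = of_real (sqrt (\<tau> n k)) * ip (kern n (x n k)) h"
    unfolding e(2) ip_def by (simp add: mult.assoc integral_mult_right)
  also have "\<dots> = of_real (sqrt (\<tau> n k)) * cnj (h (x n k))" by (simp add: ip_kern_left[OF h(1)])
  finally have "integral {-1/2..1/2} e = of_real (sqrt (\<tau> n k)) * cnj (h (x n k))" .
  moreover have "sqrt (\<tau> n k) * sqrt (\<tau> n k) = \<tau> n k" using tau_pos[OF k] by simp
  ultimately show ?thesis unfolding quad_weight_def e_def[symmetric]
    by (metis (no_types, lifting) mult.assoc of_real_mult)
qed

lemma quad_rule_formula:
  assumes h: "trigpoly n h" "Sf x \<tau> L n h = (\<lambda>_. 1)"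
  shows "quad_rule x \<tau> L n f = (\<Sum>k=1..L n. of_real (\<tau> n k) * f (x n k) * cnj (h (x n k)))"
  unfolding quad_rule_def by (rule sum.cong) (simp_all add: weight_formula[OF h])

lemma exactness: "trigpoly n p \<Longrightarrow> quad_rule x \<tau> L n p = integral {-1/2..1/2} p"
proof -
  assume p: "trigpoly n p"
  obtain h where h: "trigpoly n h" "Sf x \<tau> L n h = (\<lambda>_. 1)" using h_exists by blast
  have "integral {-1/2..1/2} p = ip p (Sf x \<tau> L n h)" by (simp add: h ip_one)
  also have "\<dots> = quad_rule x \<tau> L n p" by (simp add: ip_Sf_right[OF p] quad_rule_formula[OF h])
  finally show ?thesis by simp
qed

lemma s_bound:
  assumes h: "trigpoly n h" "Sf x \<tau> L n h = (\<lambda>_. 1)"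
  shows "(\<Sum>k=1..L n. (cmod (h (x n k)))\<^sup>2 * \<tau> n k) \<le> 1 / A"
proof -
  define s where "s = (\<Sum>k=1..L n. (cmod (h (x n k)))\<^sup>2 * \<tau> n k)"
  obtain c where c: "h = tp n c" using h(1) unfolding trigpoly_tp by blast
  have "complex_of_real s = ip (Sf x \<tau> L n h) h" unfolding s_def by (rule quad_form[OF h(1), symmetric])
  also have "\<dots> = cnj (ip h (\<lambda>_. 1))" unfolding h(2) by (rule ip_swap)
  also have "\<dots> = cnj (c 0)" unfolding ip_one c using integral_unique[OF int_tp] by simp
  finally have sc: "complex_of_real s = cnj (c 0)" .
  have s0: "s \<ge> 0" unfolding s_def by (intro sum_nonneg mult_nonneg_nonneg zero_le_power2) (simp add: tau_nonneg)
  have "s = cmod (complex_of_real s)" using s0 by simp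
  then have s_eq: "s = cmod (c 0)" using sc by simp
  define N where "N = L2norm h"
  have N0: "N \<ge> 0" unfolding N_def c L2norm_def integral_unique[OF int_norm2_tp] by (simp add: sum_nonneg)
  have "(cmod (c 0))\<^sup>2 \<le> (\<Sum>j\<in>{- int n..int n}. (cmod (c j))\<^sup>2)"
    by (rule member_le_sum) auto
  then have "s\<^sup>2 \<le> N\<^sup>2" unfolding s_eq N_def c L2norm_tp .
  then have sN: "s \<le> N" using N0 by (rule power2_le_imp_le)
  have AN: "A * N\<^sup>2 \<le> s" unfolding N_def s_def by (rule mz_low[OF h(1)])
  have "s \<le> 1 / A"
  proof (cases "N = 0")
    case True
    have "0 < 1 / A" using A_pos by simp
    then show ?thesis using sN True by linarith
  next
    case False
    then have "N > 0" using N0 by simp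
    have "(A * N) * N \<le> 1 * N" using AN sN by (simp add: power2_eq_square mult.assoc)
    then have "A * N \<le> 1" using mult_le_cancel_right_pos[OF \<open>N > 0\<close>] by blast
    then have "N \<le> 1 / A" using A_pos by (simp add: pos_le_divide_eq mult.commute)
    then show ?thesis using sN by linarith
  qed
  then show ?thesis unfolding s_def .
qed

lemma part2a:
  "(cmod (quad_rule x \<tau> L n f))\<^sup>2 \<le> (1 / A) * (\<Sum>k=1..L n. (cmod (f (x n k)))\<^sup>2 * \<tau> n k)"
proof -
  obtain h where h: "trigpoly n h" "Sf x \<tau> L n h = (\<lambda>_. 1)" using h_exists by blast
  define a where "a k = sqrt (\<tau> n k) * cmod (f (x n k))" for k
  define b where "b k = sqrt (\<tau> n k) * cmod (h (x n k))" for k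
  have "cmod (quad_rule x \<tau> L n f) \<le> (\<Sum>k=1..L n. cmod (of_real (\<tau> n k) * f (x n k) * cnj (h (x n k))))"
    unfolding quad_rule_formula[OF h] by (rule norm_sum)
  also have "\<dots> = (\<Sum>k=1..L n. a k * b k)"
  proof (rule sum.cong)
    fix k assume k: "k \<in> {1..L n}"
    have "sqrt (\<tau> n k) * sqrt (\<tau> n k) = \<tau> n k" using tau_pos[OF k] by simp
    then show "cmod (of_real (\<tau> n k) * f (x n k) * cnj (h (x n k))) = a k * b k"
      unfolding a_def b_def using tau_pos[OF k] by (simp add: norm_mult algebra_simps)
  qed simp
  finally have q1: "cmod (quad_rule x \<tau> L n f) \<le> (\<Sum>k=1..L n. a k * b k)" .
  have "(cmod (quad_rule x \<tau> L n f))\<^sup>2 \<le> (\<Sum>k=1..L n. a k * b k)\<^sup>2"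
    using q1 by (rule power_mono) simp
  also have "\<dots> \<le> (\<Sum>k=1..L n. (a k)\<^sup>2) * (\<Sum>k=1..L n. (b k)\<^sup>2)"
    by (rule Cauchy_Schwarz_ineq_sum)
  also have "(\<Sum>k=1..L n. (a k)\<^sup>2) = (\<Sum>k=1..L n. (cmod (f (x n k)))\<^sup>2 * \<tau> n k)"
    unfolding a_def by (rule sum.cong) (use tau_pos in \<open>auto simp: power_mult_distrib less_imp_le\<close>)
  also have "(\<Sum>k=1..L n. (b k)\<^sup>2) = (\<Sum>k=1..L n. (cmod (h (x n k)))\<^sup>2 * \<tau> n k)"
    unfolding b_def by (rule sum.cong) (use tau_pos in \<open>auto simp: power_mult_distrib less_imp_le\<close>)
  also have "(\<Sum>k=1..L n. (cmod (f (x n k)))\<^sup>2 * \<tau> n k) * (\<Sum>k=1..L n. (cmod (h (x n k)))\<^sup>2 * \<tau> n k)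
      \<le> (\<Sum>k=1..L n. (cmod (f (x n k)))\<^sup>2 * \<tau> n k) * (1 / A)"
    by (intro mult_left_mono s_bound[OF h] sum_nonneg mult_nonneg_nonneg zero_le_power2) (simp_all add: tau_nonneg)
  finally show ?thesis by (simp add: mult.commute)
qed

lemma part2b:
  assumes bd: "\<And>t. cmod (f t) \<le> S"
  shows "(1 / A) * (\<Sum>k=1..L n. (cmod (f (x n k)))\<^sup>2 * \<tau> n k) \<le> (B / A) * S\<^sup>2"
proof -
  have S0: "0 \<le> S" using bd[of 0] norm_ge_zero order_trans by blast
  have "(\<Sum>k=1..L n. (cmod (f (x n k)))\<^sup>2 * \<tau> n k) \<le> (\<Sum>k=1..L n. S\<^sup>2 * \<tau> n k)"
  proof (rule sum_mono)
    fix k assume k: "k \<in> {1..L n}"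
    have "(cmod (f (x n k)))\<^sup>2 \<le> S\<^sup>2" using bd by (intro power_mono) auto
    then show "(cmod (f (x n k)))\<^sup>2 * \<tau> n k \<le> S\<^sup>2 * \<tau> n k"
      using tau_nonneg[OF k] by (rule mult_right_mono)
  qed
  also have "\<dots> = S\<^sup>2 * (\<Sum>k=1..L n. \<tau> n k)" by (simp add: sum_distrib_left)
  also have "\<dots> \<le> S\<^sup>2 * B" using sum_tau_le by (intro mult_left_mono) auto
  finally have "(\<Sum>k=1..L n. (cmod (f (x n k)))\<^sup>2 * \<tau> n k) \<le> S\<^sup>2 * B" .
  then have "(1 / A) * (\<Sum>k=1..L n. (cmod (f (x n k)))\<^sup>2 * \<tau> n k) \<le> (1 / A) * (S\<^sup>2 * B)"
    using A_pos by (intro mult_left_mono) auto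
  then show ?thesis by (simp add: field_simps)
qed

end

lemma periodic_nat:
  fixes f :: "real \<Rightarrow> 'a"
  assumes "\<forall>t. f (t + 1) = f t"
  shows "f (t + real k) = f t"
proof (induction k)
  case (Suc k)
  have "f (t + real (Suc k)) = f ((t + real k) + 1)" by (simp add: algebra_simps)
  also have "\<dots> = f (t + real k)" using assms by blast
  finally show ?case using Suc by simp
qed simp

lemma periodic_frac:
  fixes f :: "real \<Rightarrow> 'a"
  assumes "\<forall>t. f (t + 1) = f t"
  shows "f t = f (t - of_int \<lfloor>t\<rfloor>)"
proof (cases "\<lfloor>t\<rfloor> \<ge> 0")
  case True
  have "f ((t - of_int \<lfloor>t\<rfloor>) + real (nat \<lfloor>t\<rfloor>)) = f (t - of_int \<lfloor>t\<rfloor>)"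
    by (rule periodic_nat[OF assms])
  then show ?thesis using True by simp
next
  case False
  have "f (t + real (nat (- \<lfloor>t\<rfloor>))) = f t"
    by (rule periodic_nat[OF assms])
  then show ?thesis using False by simp
qed

lemma sobolev_bounded:
  assumes "sobolev \<sigma> f"
  shows "cmod (f t) \<le> supnorm f"
proof -
  have per: "\<forall>t. f (t + 1) = f t" and cont: "continuous_on UNIV f"
    using assms unfolding sobolev_def by auto
  have "compact (f ` {0..1})"
    by (rule compact_continuous_image[OF continuous_on_subset[OF cont]]) auto
  then obtain M where M: "\<And>y. y \<in> f ` {0..1} \<Longrightarrow> norm y \<le> M"
    using compact_imp_bounded bounded_iff by metis
  have "cmod (f s) \<le> M" for s
  proof -
    have "s - of_int \<lfloor>s\<rfloor> \<in> {0..1}"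
      using frac_lt_1[of s] frac_ge_0[of s] by (auto simp: frac_def simp del: frac_ge_0)
    then show ?thesis using M periodic_frac[OF per, of s] by force
  qed
  then have "bdd_above (range (\<lambda>t. cmod (f t)))" by (intro bdd_aboveI2[where M=M]) simp
  then show ?thesis unfolding supnorm_def by (rule cSUP_upper[OF UNIV_I])
qed

theorem lemma2p6:
  fixes x \<tau> :: "nat \<Rightarrow> nat \<Rightarrow> real" and L :: "nat \<Rightarrow> nat" and A B :: real
  assumes "MZ_family x \<tau> L A B"
  shows "(\<forall>n p. trigpoly n p \<longrightarrow> quad_rule x \<tau> L n p = integral {-1/2..1/2} p)
       \<and> (\<forall>\<sigma> f n. \<sigma> > 1/2 \<longrightarrow> sobolev \<sigma> f \<longrightarrow>
            (cmod (quad_rule x \<tau> L n f))\<^sup>2 \<le> (1 / A) * (\<Sum>k=1..L n. (cmod (f (x n k)))\<^sup>2 * \<tau> n k)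
          \<and> (1 / A) * (\<Sum>k=1..L n. (cmod (f (x n k)))\<^sup>2 * \<tau> n k) \<le> (B / A) * (supnorm f)\<^sup>2)"
proof (intro conjI allI impI)
  fix n p assume "trigpoly n p"
  then show "quad_rule x \<tau> L n p = integral {-1/2..1/2} p" by (rule exactness[OF assms])
next
  fix \<sigma> f n
  show "(cmod (quad_rule x \<tau> L n f))\<^sup>2 \<le> (1 / A) * (\<Sum>k=1..L n. (cmod (f (x n k)))\<^sup>2 * \<tau> n k)"
    by (rule part2a[OF assms])
  assume "sobolev \<sigma> f"
  then show "(1 / A) * (\<Sum>k=1..L n. (cmod (f (x n k)))\<^sup>2 * \<tau> n k) \<le> (B / A) * (supnorm f)\<^sup>2"
    by (intro part2b[OF assms] sobolev_bounded)
qed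

end
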